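(* Let $s>2$ be an integer, $A_s=\{0,1,\dots,s-1\}$, and let $A_0,A_1$ be disjoint subsets of $A_s$ with $A_0\cup A_1=A_s$, $A_0\neq A_s\neq A_1$. For a sequence $(\alpha_n)\in L_s$ define $(\beta_n)$ by $\beta_1=0$ if $\alpha_1\in A_0$, $\beta_1=1$ if $\alpha_1\in A_1$, and for $n\ge1$, $\beta_{n+1}=\beta_n$ if $\alpha_{n+1}=\alpha_n$ and $\beta_{n+1}=1-\beta_n$ if $\alpha_{n+1}\neq\alpha_n$, and set $F((\alpha_n))=\Delta^{2*}_{\beta_1\beta_2\dots}$. Then $f(\Delta^{s*}_{\alpha_1\alpha_2\dots})=F((\alpha_n))$ well defines a function $f:[0,1]\to[0,1]$; that is, whenever $(\alpha_n),(\alpha'_n)\in L_s$ satisfy $\Delta^{s*}_{\alpha_1\alpha_2\dots}=\Delta^{s*}_{\alpha'_1\alpha'_2\dots}$, we have $F((\alpha_n))=F((\alpha'_n))$.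
   Context: $L_s=A_s\times A_s\times\cdots$ denotes the space of sequences $(\alpha_n)$ with $\alpha_n\in A_s$. The $s*$-representation is an encoding of $[0,1]$ topologically equivalent to the classical $s$-adic one: there is a continuous strictly monotone surjection $h_s:[0,1]\to[0,1]$ such that $\Delta^{s*}_{\alpha_1\alpha_2\dots}=h_s\big(\sum_{n\ge1}\alpha_n s^{-n}\big)$ for every $(\alpha_n)\in L_s$. Likewise the $2*$-representation is given by a continuous strictly monotone surjection $h_2:[0,1]\to[0,1]$ via $\Delta^{2*}_{\beta_1\beta_2\dots}=h_2\big(\sum_{n\ge1}\beta_n 2^{-n}\big)$, $\beta_n\in\{0,1\}$. *)

theory Defs
  imports "HOL-Analysis.Analysis"
begin

text \<open>Sequences are indexed from 0: a 0 plays the role of alpha_1.\<close>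

definition digit_seq :: "nat \<Rightarrow> (nat \<Rightarrow> nat) \<Rightarrow> bool" where
  "digit_seq s a \<longleftrightarrow> (\<forall>n. a n < s)"

definition adic_val :: "nat \<Rightarrow> (nat \<Rightarrow> nat) \<Rightarrow> real" where
  "adic_val s a = (\<Sum>n. real (a n) / real s ^ Suc n)"

text \<open>Encoding Delta^{s*} via the homeomorphism h.\<close>
definition Delta_star :: "(real \<Rightarrow> real) \<Rightarrow> nat \<Rightarrow> (nat \<Rightarrow> nat) \<Rightarrow> real" where
  "Delta_star h s a = h (adic_val s a)"

definition admissible_h :: "(real \<Rightarrow> real) \<Rightarrow> bool" where
  "admissible_h h \<longleftrightarrow> continuous_on {0..1} h \<and> strict_mono_on {0..1} h \<and> h ` {0..1} = {0..1}"

fun beta :: "nat set \<Rightarrow> nat set \<Rightarrow> (nat \<Rightarrow> nat) \<Rightarrow> nat \<Rightarrow> nat" where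
  "beta A0 A1 a 0 = (if a 0 \<in> A0 then 0 else 1)"
| "beta A0 A1 a (Suc n) = (if a (Suc n) = a n then beta A0 A1 a n else 1 - beta A0 A1 a n)"

end

theory Submission
  imports Defs
begin

lemma summable_digits:
  assumes "s \<ge> 2" "\<And>n. a n < s"
  shows "summable (\<lambda>n. real (a n) / real s ^ Suc n)"
proof (rule summable_comparison_test[of _ "\<lambda>n. (1 / real s) ^ n"])
  show "summable (\<lambda>n. (1 / real s) ^ n)"
    using assms(1) by (intro summable_geometric) auto
  show "\<exists>N. \<forall>n\<ge>N. norm (real (a n) / real s ^ Suc n) \<le> (1 / real s) ^ n"
  proof (intro exI allI impI)
    fix n
    have "real (a n) \<le> real s" using assms(2)[of n] by simp
    hence "real (a n) / real s ^ Suc n \<le> real s / real s ^ Suc n"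
      using assms(1) by (intro divide_right_mono) auto
    also have "\<dots> = (1 / real s) ^ n" using assms(1) by (simp add: power_divide)
    finally show "norm (real (a n) / real s ^ Suc n) \<le> (1 / real s) ^ n" by simp
  qed
qed

lemma tail_geom:
  assumes "s \<ge> 2"
  shows "(\<lambda>n. (real s - 1) / real s ^ Suc (n + Suc k)) sums (1 / real s ^ Suc k)"
proof -
  have g: "(\<lambda>n. (1 / real s) ^ n) sums (1 / (1 - 1 / real s))"
    using assms by (intro geometric_sums) auto
  have "(\<lambda>n. ((real s - 1) / real s ^ Suc (Suc k)) * (1 / real s) ^ n) sums
        (((real s - 1) / real s ^ Suc (Suc k)) * (1 / (1 - 1 / real s)))"
    by (rule sums_mult[OF g])
  moreover have "\<And>n. ((real s - 1) / real s ^ Suc (Suc k)) * (1 / real s) ^ n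
      = (real s - 1) / real s ^ Suc (n + Suc k)"
    using assms by (simp add: power_divide power_add field_simps)
  moreover have "((real s - 1) / real s ^ Suc (Suc k)) * (1 / (1 - 1 / real s)) = 1 / real s ^ Suc k"
    using assms by (simp add: field_simps)
  ultimately show ?thesis by simp
qed

lemma cls:
  assumes s: "s \<ge> 2" and da: "\<And>n. a n < s" and db: "\<And>n. b n < s"
    and eq: "adic_val s a = adic_val s b"
    and pre: "\<And>n. n < k \<Longrightarrow> a n = b n" and lt: "a k < b k"
  shows "b k = a k + 1 \<and> (\<forall>n>k. a n = s - 1) \<and> (\<forall>n>k. b n = 0)"
proof -
  define f where "f n = real (a n) / real s ^ Suc n" for n
  define g where "g n = real (b n) / real s ^ Suc n" for n
  define D where "D n = (real s - 1 - real (a (n + Suc k))) / real s ^ Suc (n + Suc k)" for n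
  have sf: "summable f" unfolding f_def using summable_digits[OF s da] .
  have sg: "summable g" unfolding g_def using summable_digits[OF s db] .
  have sf': "summable (\<lambda>n. f (n + Suc k))" using sf by (rule summable_ignore_initial_segment)
  have sg': "summable (\<lambda>n. g (n + Suc k))" using sg by (rule summable_ignore_initial_segment)
  have tg: "(\<lambda>n. (real s - 1) / real s ^ Suc (n + Suc k)) sums (1 / real s ^ Suc k)"
    using tail_geom[OF s] .
  have Dsum: "D sums (1 / real s ^ Suc k - (\<Sum>n. f (n + Suc k)))"
  proof -
    have "(\<lambda>n. (real s - 1) / real s ^ Suc (n + Suc k) - f (n + Suc k)) sums
       (1 / real s ^ Suc k - (\<Sum>n. f (n + Suc k)))"
      using sums_diff[OF tg summable_sums[OF sf']] .
    moreover have "\<And>n. (real s - 1) / real s ^ Suc (n + Suc k) - f (n + Suc k) = D n"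
      unfolding D_def f_def by (simp add: diff_divide_distrib)
    ultimately show ?thesis by simp
  qed
  have Dnn: "\<And>n. D n \<ge> 0"
  proof -
    fix n
    have "real (a (n + Suc k)) \<le> real s - 1" using da[of "n + Suc k"] s by linarith
    thus "D n \<ge> 0" unfolding D_def by simp
  qed
  have gnn: "\<And>n. g (n + Suc k) \<ge> 0" unfolding g_def by simp
  have e1: "adic_val s a = (\<Sum>n. f (n + Suc k)) + sum f {..<k} + f k"
    unfolding adic_val_def f_def[symmetric] using suminf_split_initial_segment[OF sf, of "Suc k"] by simp
  have e2: "adic_val s b = (\<Sum>n. g (n + Suc k)) + sum g {..<k} + g k"
    unfolding adic_val_def g_def[symmetric] using suminf_split_initial_segment[OF sg, of "Suc k"] by simp
  have e3: "sum f {..<k} = sum g {..<k}" unfolding f_def g_def using pre by simp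
  define TD where "TD = suminf D"
  define TG where "TG = (\<Sum>n. g (n + Suc k))"
  have TDv: "TD = 1 / real s ^ Suc k - (\<Sum>n. f (n + Suc k))" unfolding TD_def using Dsum by (simp add: sums_iff)
  have TD0: "TD \<ge> 0" unfolding TD_def using Dnn suminf_nonneg[OF sums_summable[OF Dsum]] by simp
  have TG0: "TG \<ge> 0" unfolding TG_def using gnn suminf_nonneg[OF sg'] by simp
  have key: "(real (b k) - real (a k) - 1) / real s ^ Suc k + TG + TD = 0"
  proof -
    have "g k - f k + TG + TD = 1 / real s ^ Suc k"
      using eq e1 e2 e3 TDv unfolding TG_def by linarith
    moreover have "g k - f k = (real (b k) - real (a k)) / real s ^ Suc k"
      unfolding f_def g_def by (simp add: diff_divide_distrib)
    ultimately show ?thesis by (simp add: diff_divide_distrib)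
  qed
  have nn: "(real (b k) - real (a k) - 1) / real s ^ Suc k \<ge> 0" using lt by simp
  have z1: "(real (b k) - real (a k) - 1) / real s ^ Suc k = 0" and z2: "TG = 0" and z3: "TD = 0"
    using key nn TG0 TD0 by linarith+
  have c1: "b k = a k + 1" using z1 s lt by simp
  have "\<forall>n. D n = 0" using z3 unfolding TD_def using suminf_eq_zero_iff[OF sums_summable[OF Dsum] Dnn] by simp
  hence c2: "\<forall>n>k. a n = s - 1"
  proof (intro allI impI)
    fix n assume "\<forall>n. D n = 0" "n > k"
    define m where "m = n - Suc k"
    have m: "n = m + Suc k" using \<open>n > k\<close> unfolding m_def by simp
    have "D m = 0" using \<open>\<forall>n. D n = 0\<close> by simp
    hence "real (a n) = real s - 1" unfolding D_def m using s by simp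
    thus "a n = s - 1" using s by linarith
  qed
  have "\<forall>n. g (n + Suc k) = 0" using z2 unfolding TG_def using suminf_eq_zero_iff[OF sg' gnn] by simp
  hence c3: "\<forall>n>k. b n = 0"
  proof (intro allI impI)
    fix n assume "\<forall>n. g (n + Suc k) = 0" "n > k"
    define m where "m = n - Suc k"
    have m: "n = m + Suc k" using \<open>n > k\<close> unfolding m_def by simp
    have "g (m + Suc k) = 0" using \<open>\<forall>n. g (n + Suc k) = 0\<close> by simp
    thus "b n = 0" unfolding g_def m using s by simp
  qed
  show ?thesis using c1 c2 c3 by simp
qed


lemma beta_le: "beta A0 A1 a n \<le> 1"
  by (induction n) auto

lemma beta_pre: "(\<And>n. n < k \<Longrightarrow> a n = b n) \<Longrightarrow> n < k \<Longrightarrow> beta A0 A1 a n = beta A0 A1 b n"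
  by (induction n) auto

lemma beta_tail:
  assumes "\<And>n. n > k \<Longrightarrow> a n = c" "c \<noteq> a k"
  shows "n > k \<Longrightarrow> beta A0 A1 a n = 1 - beta A0 A1 a k"
proof (induction n)
  case 0 then show ?case by simp
next
  case (Suc m)
  show ?case
  proof (cases "m = k")
    case True then show ?thesis using assms by simp
  next
    case False
    hence "m > k" using Suc.prems by simp
    then show ?thesis using Suc.IH assms(1)[of m] assms(1)[of "Suc m"] by simp
  qed
qed

lemma val:
  assumes le: "\<And>n. b n \<le> 1" and tl: "\<And>n. n > k \<Longrightarrow> b n = 1 - b k"
  shows "adic_val 2 b = (\<Sum>n<k. real (b n) / 2 ^ Suc n) + 1 / 2 ^ Suc k"
proof -
  define f where "f n = real (b n) / real 2 ^ Suc n" for n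
  have sf: "summable f" unfolding f_def
    by (rule summable_digits) (use le in \<open>auto simp: less_Suc_eq_le numeral_2_eq_2\<close>)
  have tg: "(\<lambda>n. (real 2 - 1) / real 2 ^ Suc (n + Suc k)) sums (1 / real 2 ^ Suc k)"
    using tail_geom[of 2 k] by simp
  have bk: "real (1 - b k) = 1 - real (b k)" using le[of k] by auto
  have "(\<lambda>n. (1 - real (b k)) * ((real 2 - 1) / real 2 ^ Suc (n + Suc k))) sums
        ((1 - real (b k)) * (1 / real 2 ^ Suc k))"
    by (rule sums_mult[OF tg])
  moreover have "\<And>n. (1 - real (b k)) * ((real 2 - 1) / real 2 ^ Suc (n + Suc k)) = f (n + Suc k)"
    unfolding f_def using tl bk by simp
  ultimately have T: "(\<Sum>n. f (n + Suc k)) = (1 - real (b k)) * (1 / 2 ^ Suc k)"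
    by (simp add: sums_iff)
  have "adic_val 2 b = (\<Sum>n. f (n + Suc k)) + sum f {..<k} + f k"
    unfolding adic_val_def f_def[symmetric] using suminf_split_initial_segment[OF sf, of "Suc k"] by simp
  also have "\<dots> = sum f {..<k} + (f k + (1 - real (b k)) * (1 / 2 ^ Suc k))"
    using T by simp
  also have "\<dots> = sum f {..<k} + 1 / 2 ^ Suc k"
    by (simp add: f_def field_simps)
  finally show ?thesis unfolding f_def by simp
qed

lemma fin:
  assumes s: "s \<ge> 2" and db: "\<And>n. b n < s"
    and pre: "\<And>n. n < k \<Longrightarrow> a n = b n" and lt: "a k < b k"
    and c: "b k = a k + 1 \<and> (\<forall>n>k. a n = s - 1) \<and> (\<forall>n>k. b n = 0)"
  shows "adic_val 2 (beta A0 A1 a) = adic_val 2 (beta A0 A1 b)"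
proof -
  have "b k < s" using db .
  have ta: "\<And>n. n > k \<Longrightarrow> beta A0 A1 a n = 1 - beta A0 A1 a k"
    by (rule beta_tail[where c = "s - 1"]) (use c lt \<open>b k < s\<close> in auto)
  have tb: "\<And>n. n > k \<Longrightarrow> beta A0 A1 b n = 1 - beta A0 A1 b k"
    by (rule beta_tail[where c = 0]) (use c in auto)
  have "adic_val 2 (beta A0 A1 a) = (\<Sum>n<k. real (beta A0 A1 a n) / 2 ^ Suc n) + 1 / 2 ^ Suc k"
    by (rule val) (use ta beta_le in auto)
  also have "\<dots> = (\<Sum>n<k. real (beta A0 A1 b n) / 2 ^ Suc n) + 1 / 2 ^ Suc k"
    using beta_pre[of k a b, OF pre] by simp
  also have "\<dots> = adic_val 2 (beta A0 A1 b)"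
    by (rule val[symmetric]) (use tb beta_le in auto)
  finally show ?thesis .
qed

lemma adic_range:
  assumes s: "s \<ge> 2" and da: "\<And>n. a n < s"
  shows "adic_val s a \<in> {0..1}"
proof -
  have sf: "summable (\<lambda>n. real (a n) / real s ^ Suc n)" using summable_digits[OF s da] .
  have g: "(\<lambda>n. (1 / real s) ^ n) sums (1 / (1 - 1 / real s))"
    using s by (intro geometric_sums) auto
  have "(\<lambda>n. ((real s - 1) / real s) * (1 / real s) ^ n) sums (((real s - 1) / real s) * (1 / (1 - 1 / real s)))"
    by (rule sums_mult[OF g])
  moreover have "\<And>n. ((real s - 1) / real s) * (1 / real s) ^ n = (real s - 1) / real s ^ Suc n"
    by (simp add: power_divide)
  moreover have "((real s - 1) / real s) * (1 / (1 - 1 / real s)) = 1"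
    using s by (simp add: field_simps)
  ultimately have G: "(\<lambda>n. (real s - 1) / real s ^ Suc n) sums 1" by (simp only:)
  have "adic_val s a \<le> 1"
    unfolding adic_val_def
  proof (rule sums_le[OF _ summable_sums[OF sf] G])
    fix n
    have "real (a n) \<le> real s - 1" using da[of n] s by linarith
    thus "real (a n) / real s ^ Suc n \<le> (real s - 1) / real s ^ Suc n"
      by (intro divide_right_mono) auto
  qed
  moreover have "adic_val s a \<ge> 0" unfolding adic_val_def by (rule suminf_nonneg[OF sf]) simp
  ultimately show ?thesis by simp
qed

theorem lemma2:
  fixes s :: nat and A0 A1 :: "nat set" and hs h2 :: "real \<Rightarrow> real"
    and a a' :: "nat \<Rightarrow> nat"
  assumes "s > 2"
    and "A0 \<inter> A1 = {}" and "A0 \<union> A1 = {..<s}"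
    and "A0 \<noteq> {..<s}" and "A1 \<noteq> {..<s}"
    and "admissible_h hs" and "admissible_h h2"
    and "digit_seq s a" and "digit_seq s a'"
    and "Delta_star hs s a = Delta_star hs s a'"
  shows "Delta_star h2 2 (beta A0 A1 a) = Delta_star h2 2 (beta A0 A1 a')"
proof -
  have s: "s \<ge> 2" using assms(1) by simp
  have da: "\<And>n. a n < s" and db: "\<And>n. a' n < s" using assms(8,9) unfolding digit_seq_def by auto
  have inj: "inj_on hs {0..1}" using assms(6) unfolding admissible_h_def
    using strict_mono_on_imp_inj_on by blast
  have eq: "adic_val s a = adic_val s a'"
    using inj_onD[OF inj assms(10)[unfolded Delta_star_def] adic_range[OF s da] adic_range[OF s db]] .
  have "adic_val 2 (beta A0 A1 a) = adic_val 2 (beta A0 A1 a')"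
  proof (cases "a = a'")
    case True then show ?thesis by simp
  next
    case False
    then obtain m where "a m \<noteq> a' m" by auto
    define k where "k = (LEAST n. a n \<noteq> a' n)"
    have ne: "a k \<noteq> a' k" unfolding k_def by (rule LeastI[of _ m]) fact
    have pre: "\<And>n. n < k \<Longrightarrow> a n = a' n" unfolding k_def using not_less_Least by blast
    show ?thesis
    proof (cases "a k < a' k")
      case True
      show ?thesis by (rule fin[OF s db pre True cls[OF s da db eq pre True]])
    next
      case False
      hence lt: "a' k < a k" using ne by simp
      have pre': "\<And>n. n < k \<Longrightarrow> a' n = a n" using pre by simp
      show ?thesis by (rule fin[OF s da pre' lt cls[OF s db da eq[symmetric] pre' lt], symmetric])
    qed
  qed
  then show ?thesis unfolding Delta_star_def by simp
qed

end
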